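(* Let $S$ be a $d\times d$ symmetric positive semidefinite matrix and $L,U$ symmetric $d\times d$ matrices with entries in $\mathbb{R}\cup\{-\infty,+\infty\}$ such that $L_{ij}\le0\le U_{ij}$ for $i\ne j$ and $L_{ii}=U_{ii}=0$. Consider the problem of minimizing $-\log\det K+\operatorname{tr}(SK)+\|K\|_{LU}$ over positive definite $K$. If the optimum exists, it is the unique positive definite matrix $\widehat K$, with $\widehat\Sigma=\widehat K^{-1}$, satisfying for all $i,j\in V=\{1,\dots,d\}$: $\widehat\Sigma_{ij}-S_{ij}\in\{L_{ij}\}$ if $\widehat K_{ij}<0$; $\widehat\Sigma_{ij}-S_{ij}\in[L_{ij},U_{ij}]$ if $\widehat K_{ij}=0$; $\widehat\Sigma_{ij}-S_{ij}\in\{U_{ij}\}$ if $\widehat K_{ij}>0$.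
   Context: $\|K\|_{LU}=\sum_{i\neq j}\max\{L_{ij}K_{ij},U_{ij}K_{ij}\}$ with the convention $\pm\infty\cdot0=0$. *)

theory Defs
  imports "HOL-Analysis.Analysis"
begin

definition psd_mat :: "real^'d^'d \<Rightarrow> bool" where
  "psd_mat A \<longleftrightarrow> transpose A = A \<and> (\<forall>x. 0 \<le> x \<bullet> (A *v x))"

definition pd_mat :: "real^'d^'d \<Rightarrow> bool" where
  "pd_mat A \<longleftrightarrow> transpose A = A \<and> (\<forall>x. x \<noteq> 0 \<longrightarrow> 0 < x \<bullet> (A *v x))"

text \<open>LU-norm: sum over off-diagonal pairs of max(L_ij K_ij, U_ij K_ij); ereal
  multiplication already satisfies (+-infinity) * 0 = 0.\<close>
definition LU_norm :: "ereal^'d^'d \<Rightarrow> ereal^'d^'d \<Rightarrow> real^'d^'d \<Rightarrow> ereal" where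
  "LU_norm L U K = (\<Sum>(i,j)\<in>{(i,j). i \<noteq> j}.
      max (L$i$j * ereal (K$i$j)) (U$i$j * ereal (K$i$j)))"

definition objective :: "real^'d^'d \<Rightarrow> ereal^'d^'d \<Rightarrow> ereal^'d^'d \<Rightarrow> real^'d^'d \<Rightarrow> ereal" where
  "objective S L U K = ereal (- ln (det K) + trace (S ** K)) + LU_norm L U K"

definition optimality_cond :: "real^'d^'d \<Rightarrow> ereal^'d^'d \<Rightarrow> ereal^'d^'d \<Rightarrow> real^'d^'d \<Rightarrow> bool" where
  "optimality_cond S L U K \<longleftrightarrow> (\<forall>i j.
      (K$i$j < 0 \<longrightarrow> ereal (matrix_inv K $i$j - S$i$j) = L$i$j) \<and>
      (K$i$j = 0 \<longrightarrow> L$i$j \<le> ereal (matrix_inv K $i$j - S$i$j) \<and>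
                        ereal (matrix_inv K $i$j - S$i$j) \<le> U$i$j) \<and>
      (K$i$j > 0 \<longrightarrow> ereal (matrix_inv K $i$j - S$i$j) = U$i$j))"

end

theory Submission
  imports Defs
begin

lemma minv:
  fixes A :: "real^'n^'n"
  assumes "invertible A"
  shows "A ** matrix_inv A = mat 1" "matrix_inv A ** A = mat 1"
proof -
  have "\<exists>A'. A ** A' = mat 1 \<and> A' ** A = mat 1" using assms unfolding invertible_def by blast
  then have "A ** matrix_inv A = mat 1 \<and> matrix_inv A ** A = mat 1"
    unfolding matrix_inv_def by (rule someI_ex)
  then show "A ** matrix_inv A = mat 1" "matrix_inv A ** A = mat 1" by auto
qed

lemma pd_invertible:
  fixes K :: "real^'n^'n"
  assumes "pd_mat K" shows "invertible K"
proof -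
  have "\<forall>x. K *v x = 0 \<longrightarrow> x = 0"
  proof (intro allI impI)
    fix x assume "K *v x = 0"
    then have "x \<bullet> (K *v x) = 0" by simp
    then show "x = 0" using assms unfolding pd_mat_def by force
  qed
  then show ?thesis using matrix_left_invertible_ker invertible_left_inverse by blast
qed

lemma minv_sym:
  fixes A :: "real^'n^'n"
  assumes "invertible A" "transpose A = A"
  shows "transpose (matrix_inv A) = matrix_inv A"
proof -
  have "transpose (matrix_inv A) ** A = mat 1"
    by (metis assms matrix_transpose_mul minv(1) transpose_mat)
  then have "transpose (matrix_inv A) = transpose (matrix_inv A) ** (A ** matrix_inv A)"
    using minv(1)[OF assms(1)] by simp
  also have "\<dots> = matrix_inv A"
    by (metis \<open>transpose (matrix_inv A) ** A = mat 1\<close> matrix_mul_assoc matrix_mul_lid)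
  finally show ?thesis .
qed

lemma pd_inv:
  fixes K :: "real^'n^'n"
  assumes "pd_mat K" shows "pd_mat (matrix_inv K)"
proof -
  have inv: "invertible K" using pd_invertible assms by blast
  have sym: "transpose K = K" using assms pd_mat_def by blast
  show ?thesis unfolding pd_mat_def
  proof (intro conjI allI impI)
    show "transpose (matrix_inv K) = matrix_inv K" by (rule minv_sym[OF inv sym])
    fix x :: "real^'n" assume "x \<noteq> 0"
    define y where "y = matrix_inv K *v x"
    have xy: "x = K *v y" unfolding y_def
      by (simp add: matrix_vector_mul_assoc minv(1)[OF inv])
    then have "y \<noteq> 0" using \<open>x \<noteq> 0\<close> by auto
    have "x \<bullet> (matrix_inv K *v x) = (K *v y) \<bullet> y" using xy y_def by simp
    also have "\<dots> = y \<bullet> (K *v y)" by (simp add: inner_commute)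
    also have "\<dots> > 0" using assms \<open>y \<noteq> 0\<close> unfolding pd_mat_def by blast
    finally show "0 < x \<bullet> (matrix_inv K *v x)" .
  qed
qed

lemma pd_coercive:
  fixes K :: "real^'n^'n"
  assumes "pd_mat K" shows "\<exists>c>0. \<forall>x. c * (x \<bullet> x) \<le> x \<bullet> (K *v x)"
proof -
  have cont: "continuous_on (sphere 0 1) (\<lambda>x::real^'n. x \<bullet> (K *v x))"
    by (intro continuous_intros linear_continuous_on matrix_vector_mul_linear)
  have ne: "sphere (0::real^'n) 1 \<noteq> {}" by simp
  obtain x0 where x0: "x0 \<in> sphere 0 1" and mn: "\<forall>y\<in>sphere 0 1. x0 \<bullet> (K *v x0) \<le> y \<bullet> (K *v y)"
    using continuous_attains_inf[OF compact_sphere ne cont] by blast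
  define c where "c = x0 \<bullet> (K *v x0)"
  have "x0 \<noteq> 0" using x0 by auto
  then have "c > 0" using assms unfolding pd_mat_def c_def by blast
  moreover have "c * (x \<bullet> x) \<le> x \<bullet> (K *v x)" for x
  proof (cases "x = 0")
    case True then show ?thesis by simp
  next
    case False
    define y where "y = (1 / norm x) *\<^sub>R x"
    have "y \<in> sphere 0 1" using False by (simp add: y_def)
    then have "c \<le> y \<bullet> (K *v y)" using mn c_def by blast
    also have "y \<bullet> (K *v y) = (x \<bullet> (K *v x)) / (norm x)^2"
      by (simp add: y_def matrix_vector_mult_scaleR power2_eq_square)
    finally have "c * (norm x)^2 \<le> x \<bullet> (K *v x)" using False
      by (simp add: field_simps)
    then show ?thesis by (simp add: power2_norm_eq_inner)
  qed
  ultimately show ?thesis by blast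
qed

lemma mat1_entry: "(mat 1 :: real^'n^'n)$i$j = (if i = j then 1 else 0)"
  by (simp add: mat_def)

lemma perm_moves_other:
  assumes "p permutes (UNIV::'n set)" "p \<noteq> id"
  shows "\<exists>j. j \<noteq> i \<and> p j \<noteq> j"
proof -
  obtain k where k: "p k \<noteq> k" using assms(2) by (meson eq_id_iff)
  show ?thesis
  proof (cases "k = i")
    case False then show ?thesis using k by blast
  next
    case True
    have "p (p i) \<noteq> p i"
      using k True permutes_inj[OF assms(1)] by (metis injD)
    then show ?thesis using k True by metis
  qed
qed

lemma deriv_det:
  fixes M :: "real^'n^'n"
  shows "((\<lambda>t. det (mat 1 + t *\<^sub>R M)) has_real_derivative trace M) (at 0)"
proof -
  let ?P = "{p. p permutes (UNIV::'n set)}"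
  let ?d = "\<lambda>p j. (if j = p j then 1 else 0::real)"
  have ent: "(mat 1 + t *\<^sub>R M)$i$j = (if i = j then 1 else 0) + t * M$i$j" for t i j
    by (simp add: mat1_entry)
  have eq: "(\<lambda>t. det (mat 1 + t *\<^sub>R M)) =
     (\<lambda>t. \<Sum>p\<in>?P. of_int (sign p) * (\<Prod>i\<in>UNIV. (?d p i + t * M$i$(p i))))"
    by (simp add: det_def mat1_entry)
  have D: "((\<lambda>t. \<Sum>p\<in>?P. of_int (sign p) * (\<Prod>i\<in>UNIV. (?d p i + t * M$i$(p i))))
     has_real_derivative (\<Sum>p\<in>?P. of_int (sign p) * (\<Sum>i\<in>UNIV. M$i$(p i) * (\<Prod>j\<in>UNIV-{i}. (?d p j + 0 * M$j$(p j)))))) (at 0)"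
    by (intro DERIV_sum DERIV_cmult has_field_derivative_prod derivative_eq_intros) auto
  have inner: "(\<Sum>i\<in>UNIV. M$i$(p i) * (\<Prod>j\<in>UNIV-{i}. (?d p j + 0 * M$j$(p j)))) = 0"
    if pP: "p \<in> ?P" "p \<noteq> id" for p
  proof (intro sum.neutral ballI)
    fix i
    have "p permutes UNIV" using pP(1) by simp
    from perm_moves_other[OF this pP(2)] obtain j where j: "j \<noteq> i" "p j \<noteq> j" by blast
    have "(\<Prod>j\<in>UNIV-{i}. (?d p j + 0 * M$j$(p j))) = 0"
    proof (rule prod_zero)
      show "\<exists>a\<in>UNIV-{i}. ?d p a + 0 * M$a$(p a) = 0" using j by (intro bexI[of _ j]) auto
    qed simp
    then show "M$i$(p i) * (\<Prod>j\<in>UNIV-{i}. (?d p j + 0 * M$j$(p j))) = 0" by simp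
  qed
  have idP: "id \<in> ?P" by (simp add: permutes_id)
  have "(\<Sum>p\<in>?P. of_int (sign p) * (\<Sum>i\<in>UNIV. M$i$(p i) * (\<Prod>j\<in>UNIV-{i}. (?d p j + 0 * M$j$(p j)))))
      = of_int (sign (id::'n\<Rightarrow>'n)) * (\<Sum>i\<in>UNIV. M$i$(id i) * (\<Prod>j\<in>UNIV-{i}. (?d id j + 0 * M$j$(id j))))"
    using inner idP by (subst sum.remove[OF _ idP]) (simp_all add: sum.neutral)
  also have "\<dots> = trace M" by (simp add: sign_id trace_def)
  finally show ?thesis using D eq by simp
qed

lemma ip_sym:
  fixes B :: "real^'n^'n"
  assumes "transpose B = B"
  shows "x \<bullet> (B *v y) = y \<bullet> (B *v x)"
  by (metis assms dot_lmul_matrix inner_commute transpose_matrix_vector)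

lemma mv_sum: "(B::real^'n^'m) *v sum f A = (\<Sum>x\<in>A. B *v f x)"
  by (induction A rule: infinite_finite_induct) (auto simp: matrix_vector_right_distrib)

lemma bgs:
  fixes B :: "real^'n^'n" and S :: "(real^'n) set"
  assumes sym: "transpose B = B" and pd: "\<And>x. x \<noteq> 0 \<Longrightarrow> x \<bullet> (B *v x) > 0" and fS: "finite S"
  shows "\<exists>C. finite C \<and> span C = span S \<and> (\<forall>u\<in>C. \<forall>v\<in>C. u \<noteq> v \<longrightarrow> u \<bullet> (B *v v) = 0)"
  using fS
proof (induct rule: finite_induct)
  case empty
  then show ?case by (intro exI[of _ "{}"]) auto
next
  case (insert a S)
  from insert.hyps(3) obtain C where C: "finite C" "span C = span S"
    "\<forall>u\<in>C. \<forall>v\<in>C. u \<noteq> v \<longrightarrow> u \<bullet> (B *v v) = 0" by blast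
  let ?a = "a - (\<Sum>x\<in>C. (x \<bullet> (B *v a) / (x \<bullet> (B *v x))) *\<^sub>R x)"
  let ?C = "insert ?a C"
  have fC: "finite ?C" using C(1) by simp
  {
    fix x k
    have th0: "\<And>(a::real^'n) b c. a - (b - c) = c + (a - b)"
      by (simp add: field_simps)
    have "x - k *\<^sub>R ?a \<in> span C \<longleftrightarrow> x - k *\<^sub>R a \<in> span C"
      unfolding scaleR_right_diff_distrib th0
      by (intro span_add_eq span_scale span_sum span_base)
  }
  then have SC: "span ?C = span (insert a S)"
    unfolding set_eq_iff span_breakdown_eq C(2)[symmetric] by auto
  have orth: "y \<bullet> (B *v ?a) = 0" if yC: "y \<in> C" for y
  proof -
    have e1: "y \<bullet> (B *v ?a) = y \<bullet> (B *v a) - (\<Sum>x\<in>C. (x \<bullet> (B *v a) / (x \<bullet> (B *v x))) * (y \<bullet> (B *v x)))"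
      by (simp add: matrix_vector_mult_diff_distrib inner_diff_right inner_sum_right
          matrix_vector_mult_scaleR mv_sum)
    have z: "\<forall>x\<in>C - {y}. (x \<bullet> (B *v a) / (x \<bullet> (B *v x))) * (y \<bullet> (B *v x)) = 0"
    proof
      fix x assume xC: "x \<in> C - {y}"
      then have "x \<in> C" "y \<noteq> x" by auto
      then have "y \<bullet> (B *v x) = 0" using C(3) yC by simp
      then show "(x \<bullet> (B *v a) / (x \<bullet> (B *v x))) * (y \<bullet> (B *v x)) = 0" by simp
    qed
    have e2: "(\<Sum>x\<in>C. (x \<bullet> (B *v a) / (x \<bullet> (B *v x))) * (y \<bullet> (B *v x)))
        = (y \<bullet> (B *v a) / (y \<bullet> (B *v y))) * (y \<bullet> (B *v y))"
      using sum.remove[OF C(1) yC, of "\<lambda>x. (x \<bullet> (B *v a) / (x \<bullet> (B *v x))) * (y \<bullet> (B *v x))"]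
        sum.neutral[OF z] by simp
    have e3: "(y \<bullet> (B *v a) / (y \<bullet> (B *v y))) * (y \<bullet> (B *v y)) = y \<bullet> (B *v a)"
    proof (cases "y = 0")
      case True
      then show ?thesis by simp
    next
      case False
      then have "y \<bullet> (B *v y) > 0" using pd[OF False] by simp
      then show ?thesis by simp
    qed
    show ?thesis using e1 e2 e3 by simp
  qed
  have "\<forall>u\<in>?C. \<forall>v\<in>?C. u \<noteq> v \<longrightarrow> u \<bullet> (B *v v) = 0"
  proof (intro ballI impI)
    fix u v assume uv: "u \<in> ?C" "v \<in> ?C" "u \<noteq> v"
    show "u \<bullet> (B *v v) = 0"
    proof (cases "u \<in> C \<and> v \<in> C")
      case True then show ?thesis using C(3) uv by simp
    next
      case False
      then have "(u = ?a \<and> v \<in> C) \<or> (v = ?a \<and> u \<in> C)" using uv by auto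
      then show ?thesis using orth ip_sym[OF sym, of u v] by auto
    qed
  qed
  then show ?case using fC SC by (intro exI[of _ ?C]) simp
qed

definition outer :: "real^'n \<Rightarrow> real^'n \<Rightarrow> real^'n^'n" where
  "outer v w = (\<chi> a b. v$a * w$b)"

lemma outer_mv: "outer v w *v y = (w \<bullet> y) *\<^sub>R v"
  by (simp add: outer_def vec_eq_iff matrix_vector_mult_def inner_vec_def sum_distrib_left mult_ac)

lemma sum_mv: "(sum f A :: real^'n^'m) *v y = (\<Sum>x\<in>A. f x *v y)"
  by (induction A rule: infinite_finite_induct) (auto simp: matrix_vector_mult_add_rdistrib)

lemma scaleR_mv: "((k::real) *\<^sub>R (M::real^'n^'m)) *v y = k *\<^sub>R (M *v y)"
  by (simp add: vec_eq_iff matrix_vector_mult_def sum_distrib_left mult_ac)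

lemma pd_factor:
  fixes B :: "real^'n^'n"
  assumes "pd_mat B"
  shows "\<exists>C. finite C \<and> (\<forall>x. x \<in> span C) \<and>
     matrix_inv B = (\<Sum>t\<in>C. (1 / (t \<bullet> (B *v t))) *\<^sub>R outer t t)"
proof -
  have sym: "transpose B = B" using assms pd_mat_def by blast
  have pd: "\<And>x. x \<noteq> 0 \<Longrightarrow> x \<bullet> (B *v x) > 0" using assms pd_mat_def by blast
  obtain C where fC: "finite C" and spC: "span C = span (Basis :: (real^'n) set)"
     and orth: "\<forall>u\<in>C. \<forall>v\<in>C. u \<noteq> v \<longrightarrow> u \<bullet> (B *v v) = 0"
    using bgs[OF sym pd, of Basis] by auto
  have inC: "x \<in> span C" for x using spC by (simp add: span_Basis)
  define N where "N = (\<Sum>t\<in>C. (1 / (t \<bullet> (B *v t))) *\<^sub>R outer t t)"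
  have exp: "x = (\<Sum>t\<in>C. ((t \<bullet> (B *v x)) / (t \<bullet> (B *v t))) *\<^sub>R t)" for x
  proof -
    obtain c where xc: "x = (\<Sum>t\<in>C. c t *\<^sub>R t)"
      using inC[of x] unfolding span_finite[OF fC] by auto
    have ct: "t \<bullet> (B *v x) = c t * (t \<bullet> (B *v t))" if tC: "t \<in> C" for t
    proof -
      have "t \<bullet> (B *v x) = (\<Sum>s\<in>C. c s * (t \<bullet> (B *v s)))"
        unfolding xc by (simp add: mv_sum inner_sum_right matrix_vector_mult_scaleR)
      also have "\<dots> = c t * (t \<bullet> (B *v t))"
      proof -
        have z: "\<forall>s\<in>C - {t}. c s * (t \<bullet> (B *v s)) = 0"
        proof
          fix s assume "s \<in> C - {t}"
          then have "s \<in> C" "t \<noteq> s" by auto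
          then show "c s * (t \<bullet> (B *v s)) = 0" using orth tC by simp
        qed
        show ?thesis using sum.remove[OF fC tC, of "\<lambda>s. c s * (t \<bullet> (B *v s))"]
          sum.neutral[OF z] by simp
      qed
      finally show ?thesis .
    qed
    have "(\<Sum>t\<in>C. c t *\<^sub>R t) = (\<Sum>t\<in>C. ((t \<bullet> (B *v x)) / (t \<bullet> (B *v t))) *\<^sub>R t)"
    proof (rule sum.cong[OF refl])
      fix t assume tC: "t \<in> C"
      show "c t *\<^sub>R t = ((t \<bullet> (B *v x)) / (t \<bullet> (B *v t))) *\<^sub>R t"
      proof (cases "t = 0")
        case True then show ?thesis by simp
      next
        case False
        then have "t \<bullet> (B *v t) > 0" using pd by blast
        then show ?thesis using ct[OF tC] by simp
      qed
    qed
    then show ?thesis using xc by simp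
  qed
  have NB: "(N ** B) *v x = mat 1 *v x" for x
  proof -
    have "(N ** B) *v x = N *v (B *v x)" by (simp add: matrix_vector_mul_assoc)
    also have "\<dots> = (\<Sum>t\<in>C. ((t \<bullet> (B *v x)) / (t \<bullet> (B *v t))) *\<^sub>R t)"
      unfolding N_def sum_mv by (intro sum.cong refl) (simp add: scaleR_mv outer_mv)
    also have "\<dots> = x" using exp[of x] by simp
    finally show ?thesis by simp
  qed
  then have "N ** B = mat 1" by (simp add: matrix_eq)
  then have BN: "B ** N = mat 1" using matrix_left_right_inverse by blast
  have inv: "invertible B" using pd_invertible assms by blast
  have "matrix_inv B = matrix_inv B ** (B ** N)" using BN by simp
  also have "\<dots> = N" by (simp add: matrix_mul_assoc minv(2)[OF inv])
  finally show ?thesis using fC inC N_def by blast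
qed

lemma transpose_comb: "transpose ((a::real) *\<^sub>R A + b *\<^sub>R (B::real^'n^'n)) = a *\<^sub>R transpose A + b *\<^sub>R transpose B"
  by (simp add: transpose_def vec_eq_iff)

lemma pd_comb:
  fixes A B :: "real^'n^'n"
  assumes "pd_mat A" "pd_mat B" "0 \<le> s" "s \<le> 1"
  shows "pd_mat ((1 - s) *\<^sub>R A + s *\<^sub>R B)"
  unfolding pd_mat_def
proof (intro conjI allI impI)
  show "transpose ((1 - s) *\<^sub>R A + s *\<^sub>R B) = (1 - s) *\<^sub>R A + s *\<^sub>R B"
    using assms(1,2) by (simp add: transpose_comb pd_mat_def)
  fix x :: "real^'n" assume x: "x \<noteq> 0"
  have a: "x \<bullet> (A *v x) > 0" and b: "x \<bullet> (B *v x) > 0" using assms(1,2) x pd_mat_def by blast+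
  have "x \<bullet> (((1 - s) *\<^sub>R A + s *\<^sub>R B) *v x) = (1 - s) * (x \<bullet> (A *v x)) + s * (x \<bullet> (B *v x))"
    by (simp add: matrix_vector_mult_add_rdistrib scaleR_mv inner_add_right)
  also have "\<dots> > 0"
  proof (cases "s = 1")
    case True then show ?thesis using b by simp
  next
    case False then have "1 - s > 0" using assms by simp
    then show ?thesis using a b assms(3) by (simp add: add_pos_nonneg)
  qed
  finally show "0 < x \<bullet> (((1 - s) *\<^sub>R A + s *\<^sub>R B) *v x)" .
qed

lemma pd_mat1: "pd_mat (mat 1 :: real^'n^'n)"
  unfolding pd_mat_def by (simp add: transpose_mat)

lemma det_pos:
  fixes K :: "real^'n^'n"
  assumes "pd_mat K" shows "0 < det K"
proof (rule ccontr)
  assume "\<not> 0 < det K"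
  then have le: "det K \<le> 0" by simp
  define f where "f s = det ((1 - s) *\<^sub>R mat 1 + s *\<^sub>R K)" for s :: real
  have feq: "f = (\<lambda>s. \<Sum>p\<in>{p. p permutes (UNIV::'n set)}. of_int (sign p) *
       (\<Prod>i\<in>UNIV. (1 - s) * (if i = p i then 1 else 0) + s * K$i$(p i)))"
    by (simp add: f_def det_def mat1_entry fun_eq_iff)
  have cont: "continuous_on {0..1} f"
    unfolding feq by (intro continuous_intros)
  have f0: "f 0 = 1" by (simp add: f_def)
  have f1: "f 1 = det K" by (simp add: f_def)
  obtain s where s: "0 \<le> s" "s \<le> 1" "f s = 0"
    using IVT2'[of f 1 0 0, OF _ _ _ cont] f0 f1 le by auto
  have "pd_mat ((1 - s) *\<^sub>R mat 1 + s *\<^sub>R K)" using pd_comb[OF pd_mat1 assms s(1,2)] .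
  then have "invertible ((1 - s) *\<^sub>R mat 1 + s *\<^sub>R K)" by (rule pd_invertible)
  then have "f s \<noteq> 0" unfolding f_def by (simp add: invertible_det_nz)
  then show False using s by simp
qed

lemma mm_add_r: "((A::real^'n^'m) + B) ** M = A ** M + B ** M"
  by (simp add: matrix_matrix_mult_def vec_eq_iff distrib_right sum.distrib)

lemma mm_diff_l: "(M::real^'n^'m) ** (A - B) = M ** A - M ** B"
  by (simp add: matrix_matrix_mult_def vec_eq_iff right_diff_distrib sum_subtractf)

lemma mm_diff_r: "((A::real^'n^'m) - B) ** M = A ** M - B ** M"
  by (simp add: matrix_matrix_mult_def vec_eq_iff left_diff_distrib sum_subtractf)

lemma mm_neg_r: "(- (A::real^'n^'m)) ** M = - (A ** M)"
  by (simp add: matrix_matrix_mult_def vec_eq_iff sum_negf)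

lemma trace_neg: "trace (- (A::real^'n^'n)) = - trace A"
  by (simp add: trace_def sum_negf)

lemma mono_aux:
  fixes l u :: ereal and k k' a a' :: real
  assumes lu: "l \<le> u"
    and h1: "k < 0 \<longrightarrow> ereal a = l" "k = 0 \<longrightarrow> l \<le> ereal a \<and> ereal a \<le> u" "k > 0 \<longrightarrow> ereal a = u"
    and h2: "k' < 0 \<longrightarrow> ereal a' = l" "k' = 0 \<longrightarrow> l \<le> ereal a' \<and> ereal a' \<le> u" "k' > 0 \<longrightarrow> ereal a' = u"
    and lt: "k' < k"
  shows "a' \<le> a"
proof (cases "k > 0")
  case True
  then have "ereal a = u" using h1 by blast
  moreover have "ereal a' \<le> u" using h2 lu by (cases "k' < 0"; cases "k' = 0") auto
  ultimately have "ereal a' \<le> ereal a" by simp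
  then show ?thesis by simp
next
  case False
  then have "k' < 0" using lt by simp
  then have "ereal a' = l" using h2 by blast
  moreover have "l \<le> ereal a" using h1 False lt by (cases "k < 0") auto
  ultimately have "ereal a' \<le> ereal a" by simp
  then show ?thesis by simp
qed

lemma mono_prod:
  fixes l u :: ereal and k k' a a' :: real
  assumes lu: "l \<le> u"
    and h1: "k < 0 \<longrightarrow> ereal a = l" "k = 0 \<longrightarrow> l \<le> ereal a \<and> ereal a \<le> u" "k > 0 \<longrightarrow> ereal a = u"
    and h2: "k' < 0 \<longrightarrow> ereal a' = l" "k' = 0 \<longrightarrow> l \<le> ereal a' \<and> ereal a' \<le> u" "k' > 0 \<longrightarrow> ereal a' = u"
  shows "0 \<le> (a - a') * (k - k')"
proof (cases k' k rule: linorder_cases)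
  case less
  then have "a' \<le> a" using mono_aux[OF lu h1 h2] by blast
  then show ?thesis using less by simp
next
  case equal then show ?thesis by simp
next
  case greater
  then have "a \<le> a'" using mono_aux[OF lu h2 h1] by blast
  then show ?thesis using greater by (simp add: mult_nonpos_nonpos)
qed

lemma sum_mm: "(sum f A :: real^'n^'m) ** M = (\<Sum>x\<in>A. f x ** M)"
  by (induction A rule: infinite_finite_induct) (auto simp: mm_add_r)

lemma trace_sum: "trace (sum f A :: real^'n^'n) = (\<Sum>x\<in>A. trace (f x))"
  by (induction A rule: infinite_finite_induct) (auto simp: trace_add trace_0[unfolded mat_0])

lemma trace_scaleR: "trace ((k::real) *\<^sub>R (A::real^'n^'n)) = k * trace A"
  by (simp add: trace_def sum_distrib_left)

lemma trace_outer: "trace (outer t t ** M) = t \<bullet> (M *v t)"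
proof -
  have "trace (outer t t ** M) = (\<Sum>i\<in>UNIV. \<Sum>k\<in>UNIV. t $ i * (t $ k * M $ k $ i))"
    by (simp add: trace_def outer_def matrix_matrix_mult_def mult_ac)
  also have "\<dots> = (\<Sum>k\<in>UNIV. \<Sum>i\<in>UNIV. t $ i * (t $ k * M $ k $ i))" by (rule sum.swap)
  also have "\<dots> = t \<bullet> (M *v t)"
    by (simp add: matrix_vector_mult_def inner_vec_def sum_distrib_left mult_ac)
  finally show ?thesis .
qed

lemma trace_sym_frob:
  fixes A B :: "real^'n^'n"
  assumes "transpose B = B"
  shows "trace (A ** B) = (\<Sum>i\<in>UNIV. \<Sum>j\<in>UNIV. A$i$j * B$i$j)"
proof -
  have "B$j$i = B$i$j" for i j using assms by (metis transpose_def vec_lambda_beta)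
  then show ?thesis by (simp add: trace_def matrix_matrix_mult_def)
qed

lemma uniq:
  fixes S :: "real^'d^'d" and L U :: "ereal^'d^'d" and K K' :: "real^'d^'d"
  assumes LU: "\<And>i j. L$i$j \<le> U$i$j"
    and pK: "pd_mat K" and pK': "pd_mat K'"
    and oK: "optimality_cond S L U K" and oK': "optimality_cond S L U K'"
  shows "K = K'"
proof -
  define \<Sigma> where "\<Sigma> = matrix_inv K"
  define \<Sigma>' where "\<Sigma>' = matrix_inv K'"
  define D where "D = K - K'"
  have iK: "invertible K" and iK': "invertible K'" using pK pK' pd_invertible by blast+
  have sK: "transpose K = K" and sK': "transpose K' = K'" using pK pK' pd_mat_def by blast+
  have sD: "transpose D = D" unfolding D_def using sK sK' by (simp add: transpose_def vec_eq_iff)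
  have pS: "pd_mat \<Sigma>" unfolding \<Sigma>_def using pd_inv[OF pK] .
  have each: "0 \<le> (\<Sigma>$i$j - \<Sigma>'$i$j) * D$i$j" for i j
  proof -
    have "0 \<le> ((\<Sigma>$i$j - S$i$j) - (\<Sigma>'$i$j - S$i$j)) * (K$i$j - K'$i$j)"
      using mono_prod[OF LU, of "K$i$j" "\<Sigma>$i$j - S$i$j" i j "K'$i$j" "\<Sigma>'$i$j - S$i$j"]
        oK oK' unfolding optimality_cond_def \<Sigma>_def \<Sigma>'_def by blast
    then show ?thesis by (simp add: D_def)
  qed
  have "0 \<le> (\<Sum>i\<in>UNIV. \<Sum>j\<in>UNIV. (\<Sigma>$i$j - \<Sigma>'$i$j) * D$i$j)"
    using each by (intro sum_nonneg) auto
  also have "\<dots> = trace ((\<Sigma> - \<Sigma>') ** D)"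
    using trace_sym_frob[OF sD, of "\<Sigma> - \<Sigma>'"] by simp
  also have "\<Sigma> - \<Sigma>' = - (\<Sigma> ** D ** \<Sigma>')"
  proof -
    have "\<Sigma> ** D ** \<Sigma>' = (\<Sigma> ** K) ** \<Sigma>' - \<Sigma> ** (K' ** \<Sigma>')"
      by (simp add: D_def mm_diff_l mm_diff_r matrix_mul_assoc)
    also have "\<dots> = \<Sigma>' - \<Sigma>" by (simp add: \<Sigma>_def \<Sigma>'_def minv[OF iK] minv[OF iK'])
    finally show ?thesis by simp
  qed
  also have "trace (- (\<Sigma> ** D ** \<Sigma>') ** D) = - trace (\<Sigma>' ** (D ** \<Sigma> ** D))"
  proof -
    have "trace (- (\<Sigma> ** D ** \<Sigma>') ** D) = - trace ((\<Sigma> ** D) ** (\<Sigma>' ** D))"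
      by (simp add: matrix_mul_assoc mm_neg_r trace_neg)
    also have "trace ((\<Sigma> ** D) ** (\<Sigma>' ** D)) = trace ((\<Sigma>' ** D) ** (\<Sigma> ** D))"
      by (rule trace_mul_sym)
    finally show ?thesis by (simp add: matrix_mul_assoc)
  qed
  finally have neg: "trace (\<Sigma>' ** (D ** \<Sigma> ** D)) \<le> 0" by simp
  obtain C where fC: "finite C" and spC: "\<forall>x. x \<in> span C"
    and fac: "\<Sigma>' = (\<Sum>t\<in>C. (1 / (t \<bullet> (K' *v t))) *\<^sub>R outer t t)"
    using pd_factor[OF pK'] unfolding \<Sigma>'_def by blast
  define q where "q t = (D *v t) \<bullet> (\<Sigma> *v (D *v t))" for t
  have qt: "t \<bullet> ((D ** \<Sigma> ** D) *v t) = q t" for t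
  proof -
    have "t \<bullet> ((D ** \<Sigma> ** D) *v t) = t \<bullet> (D *v (\<Sigma> *v (D *v t)))"
      by (simp add: matrix_vector_mul_assoc matrix_mul_assoc)
    also have "\<dots> = (\<Sigma> *v (D *v t)) \<bullet> (D *v t)" using ip_sym[OF sD] by simp
    finally show ?thesis by (simp add: q_def inner_commute)
  qed
  have qnn: "0 \<le> q t" for t
    using pS unfolding pd_mat_def q_def by (cases "D *v t = 0") (auto simp: less_le)
  have wnn: "0 \<le> 1 / (t \<bullet> (K' *v t))" for t
    using pK' unfolding pd_mat_def by (cases "t = 0") (auto simp: less_le)
  have "trace (\<Sigma>' ** (D ** \<Sigma> ** D)) = (\<Sum>t\<in>C. (1 / (t \<bullet> (K' *v t))) * q t)"
    unfolding fac sum_mm trace_sum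
    by (intro sum.cong refl) (simp add: scalar_matrix_assoc[symmetric] trace_scaleR trace_outer qt)
  then have "(\<Sum>t\<in>C. (1 / (t \<bullet> (K' *v t))) * q t) = 0"
    using neg qnn wnn by (metis (no_types, lifting) antisym mult_nonneg_nonneg sum_nonneg)
  then have z: "\<forall>t\<in>C. (1 / (t \<bullet> (K' *v t))) * q t = 0"
    using sum_nonneg_eq_0_iff[OF fC, of "\<lambda>t. (1 / (t \<bullet> (K' *v t))) * q t"] mult_nonneg_nonneg[OF wnn qnn] by blast
  have Dt: "D *v t = 0" if tC: "t \<in> C" for t
  proof (cases "t = 0")
    case True then show ?thesis by simp
  next
    case False
    then have "t \<bullet> (K' *v t) > 0" using pK' pd_mat_def by blast
    then have "q t = 0" using z tC by force
    then show ?thesis using pS unfolding pd_mat_def q_def by (metis less_irrefl)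
  qed
  have "D *v x = 0" for x
  proof -
    obtain c where xc: "x = (\<Sum>t\<in>C. c t *\<^sub>R t)"
      using spC[rule_format, of x] unfolding span_finite[OF fC] by auto
    show ?thesis unfolding xc mv_sum by (simp add: matrix_vector_mult_scaleR Dt)
  qed
  then have "D = 0" by (simp add: matrix_eq)
  then show ?thesis by (simp add: D_def)
qed

lemma deriv_right_nonneg:
  fixes g :: "real \<Rightarrow> real"
  assumes "DERIV g 0 :> D" "0 < d" "\<And>t. 0 < t \<Longrightarrow> t < d \<Longrightarrow> g 0 \<le> g t"
  shows "0 \<le> D"
proof (rule ccontr)
  assume "\<not> 0 \<le> D"
  then obtain e where e: "e > 0" "\<forall>h>0. h < e \<longrightarrow> g 0 > g (0 + h)"
    using DERIV_neg_dec_right[OF assms(1)] by force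
  define t where "t = min e d / 2"
  have "0 < t" "t < e" "t < d" using e assms(2) by (auto simp: t_def)
  then show False using e assms(3)[of t] by fastforce
qed

lemma deriv_left_nonpos:
  fixes g :: "real \<Rightarrow> real"
  assumes "DERIV g 0 :> D" "0 < d" "\<And>t. -d < t \<Longrightarrow> t < 0 \<Longrightarrow> g 0 \<le> g t"
  shows "D \<le> 0"
proof (rule ccontr)
  assume "\<not> D \<le> 0"
  then obtain e where e: "e > 0" "\<forall>h>0. h < e \<longrightarrow> g (0 - h) < g 0"
    using DERIV_pos_inc_left[OF assms(1)] by force
  define t where "t = min e d / 2"
  have "0 < t" "t < e" "t < d" using e assms(2) by (auto simp: t_def)
  then show False using e assms(3)[of "-t"] by fastforce
qed

definition Fm :: "ereal \<Rightarrow> ereal \<Rightarrow> real \<Rightarrow> ereal" where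
  "Fm l u x = max (l * ereal x) (u * ereal x)"

lemma Fm_pos: "0 \<le> u \<Longrightarrow> l \<le> 0 \<Longrightarrow> 0 < x \<Longrightarrow> Fm l u x = u * ereal x"
  unfolding Fm_def
  by (smt (verit) ereal_less_eq(5) ereal_mult_left_mono max.absorb_iff2 mult.commute mult_zero_left order_trans)

lemma Fm_neg: "0 \<le> u \<Longrightarrow> l \<le> 0 \<Longrightarrow> x < 0 \<Longrightarrow> Fm l u x = l * ereal x"
  unfolding Fm_def by (metis dual_order.asym dual_order.trans ereal_less_eq(5)
    ereal_mult_le_0_iff ereal_zero_le_0_iff less_eq_real_def max.absorb_iff1 nle_le)

lemma Fm_zero: "Fm l u 0 = 0"
  by (simp add: Fm_def zero_ereal_def[symmetric])

lemma Fm_nonneg: "0 \<le> u \<Longrightarrow> l \<le> 0 \<Longrightarrow> 0 \<le> Fm l u x"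
  unfolding Fm_def by (metis ereal_zero_le_0_iff max.coboundedI1 max.coboundedI2 nle_le)

lemma scalar_kkt:
  fixes h :: "real \<Rightarrow> real" and l u :: ereal and r k s \<sigma> d :: real
  assumes lu: "l \<le> 0" "0 \<le> u"
    and der: "DERIV h 0 :> 2 * (s - \<sigma>)"
    and d: "0 < d"
    and fin: "Fm l u k \<noteq> \<infinity>"
    and ineq: "\<And>t. \<bar>t\<bar> < d \<Longrightarrow>
       ereal (h 0) + (ereal r + (Fm l u k + Fm l u k)) \<le> ereal (h t) + (ereal r + (Fm l u (k + t) + Fm l u (k + t)))"
  shows "(k < 0 \<longrightarrow> ereal (\<sigma> - s) = l) \<and>
         (k = 0 \<longrightarrow> l \<le> ereal (\<sigma> - s) \<and> ereal (\<sigma> - s) \<le> u) \<and>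
         (k > 0 \<longrightarrow> ereal (\<sigma> - s) = u)"
proof -
  have P: "k > 0 \<Longrightarrow> ereal (\<sigma> - s) = u"
  proof -
    assume k: "k > 0"
    have "Fm l u k = u * ereal k" using Fm_pos[OF lu(2,1) k] .
    then have "u \<noteq> \<infinity>" using fin k by auto
    then obtain u' where u': "u = ereal u'" using lu(2) by (cases u) auto
    define d' where "d' = min d k"
    have d': "0 < d'" using d k by (simp add: d'_def)
    have "h 0 \<le> h t + 2 * u' * t" if t: "\<bar>0 - t\<bar> < d'" for t
    proof -
      have "\<bar>t\<bar> < d" "k + t > 0" using t by (auto simp: d'_def)
      then have "ereal (h 0) + (ereal r + (ereal (u' * k) + ereal (u' * k))) \<le>
                 ereal (h t) + (ereal r + (ereal (u' * (k + t)) + ereal (u' * (k + t))))"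
        using ineq[of t] Fm_pos[OF lu(2,1) k] Fm_pos[OF lu(2,1), of "k + t"] u' by simp
      then show ?thesis by (simp add: algebra_simps)
    qed
    moreover have "DERIV (\<lambda>t. h t + 2 * u' * t) 0 :> 2 * (s - \<sigma>) + 2 * u'"
      by (auto intro!: derivative_eq_intros der)
    ultimately have "2 * (s - \<sigma>) + 2 * u' = 0"
      using DERIV_local_min[OF _ d', of "\<lambda>t. h t + 2 * u' * t"] by simp
    then show ?thesis using u' by simp
  qed
  have N: "k < 0 \<Longrightarrow> ereal (\<sigma> - s) = l"
  proof -
    assume k: "k < 0"
    have "Fm l u k = l * ereal k" using Fm_neg[OF lu(2,1) k] .
    then have "l \<noteq> -\<infinity>" using fin k by auto
    then obtain l' where l': "l = ereal l'" using lu(1) by (cases l) auto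
    define d' where "d' = min d (-k)"
    have d': "0 < d'" using d k by (simp add: d'_def)
    have "h 0 \<le> h t + 2 * l' * t" if t: "\<bar>0 - t\<bar> < d'" for t
    proof -
      have "\<bar>t\<bar> < d" "k + t < 0" using t by (auto simp: d'_def)
      then have "ereal (h 0) + (ereal r + (ereal (l' * k) + ereal (l' * k))) \<le>
                 ereal (h t) + (ereal r + (ereal (l' * (k + t)) + ereal (l' * (k + t))))"
        using ineq[of t] Fm_neg[OF lu(2,1) k] Fm_neg[OF lu(2,1), of "k + t"] l' by simp
      then show ?thesis by (simp add: algebra_simps)
    qed
    moreover have "DERIV (\<lambda>t. h t + 2 * l' * t) 0 :> 2 * (s - \<sigma>) + 2 * l'"
      by (auto intro!: derivative_eq_intros der)
    ultimately have "2 * (s - \<sigma>) + 2 * l' = 0"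
      using DERIV_local_min[OF _ d', of "\<lambda>t. h t + 2 * l' * t"] by simp
    then show ?thesis using l' by simp
  qed
  have Z1: "k = 0 \<Longrightarrow> ereal (\<sigma> - s) \<le> u"
  proof -
    assume k: "k = 0"
    show ?thesis
    proof (cases u)
      case PInf then show ?thesis by simp
    next
      case MInf then show ?thesis using lu by simp
    next
      case (real u')
      have "h 0 \<le> h t + 2 * u' * t" if t: "0 < t" "t < d" for t
      proof -
        have "\<bar>t\<bar> < d" using t by simp
        then have "ereal (h 0) + (ereal r + (0 + 0)) \<le>
                 ereal (h t) + (ereal r + (ereal (u' * t) + ereal (u' * t)))"
          using ineq[of t] Fm_pos[OF lu(2,1) t(1)] real k Fm_zero by simp
        then show ?thesis by (simp add: algebra_simps)
      qed
      moreover have "DERIV (\<lambda>t. h t + 2 * u' * t) 0 :> 2 * (s - \<sigma>) + 2 * u'"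
        by (auto intro!: derivative_eq_intros der)
      ultimately have "0 \<le> 2 * (s - \<sigma>) + 2 * u'"
        using deriv_right_nonneg[OF _ d, of "\<lambda>t. h t + 2 * u' * t"] by simp
      then show ?thesis using real by simp
    qed
  qed
  have Z2: "k = 0 \<Longrightarrow> l \<le> ereal (\<sigma> - s)"
  proof -
    assume k: "k = 0"
    show ?thesis
    proof (cases l)
      case MInf then show ?thesis by simp
    next
      case PInf then show ?thesis using lu by simp
    next
      case (real l')
      have "h 0 \<le> h t + 2 * l' * t" if t: "-d < t" "t < 0" for t
      proof -
        have "\<bar>t\<bar> < d" using t by simp
        then have "ereal (h 0) + (ereal r + (0 + 0)) \<le>
                 ereal (h t) + (ereal r + (ereal (l' * t) + ereal (l' * t)))"
          using ineq[of t] Fm_neg[OF lu(2,1) t(2)] real k Fm_zero by simp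
        then show ?thesis by (simp add: algebra_simps)
      qed
      moreover have "DERIV (\<lambda>t. h t + 2 * l' * t) 0 :> 2 * (s - \<sigma>) + 2 * l'"
        by (auto intro!: derivative_eq_intros der)
      ultimately have "2 * (s - \<sigma>) + 2 * l' \<le> 0"
        using deriv_left_nonpos[OF _ d, of "\<lambda>t. h t + 2 * l' * t"] by simp
      then show ?thesis using real by simp
    qed
  qed
  show ?thesis using P N Z1 Z2 by blast
qed

definition Pm :: "'n \<Rightarrow> 'n \<Rightarrow> real^'n^'n" where
  "Pm i j = (\<chi> a b. if a = i \<and> b = j then 1 else 0)"

definition Em :: "'n \<Rightarrow> 'n \<Rightarrow> real^'n^'n" where
  "Em i j = Pm i j + (if i = j then 0 else Pm j i)"

lemma Pm_mv: "Pm i j *v x = (\<chi> a. if a = i then x$j else 0)"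
  by (simp add: Pm_def matrix_vector_mult_def vec_eq_iff if_distrib if_distribR cong: if_cong)

lemma Pm_quad: "x \<bullet> (Pm i j *v x) = x$i * x$j"
  by (simp add: Pm_mv inner_vec_def if_distrib if_distribR cong: if_cong)

lemma Em_quad: "\<bar>x \<bullet> (Em i j *v x)\<bar> \<le> 2 * (x \<bullet> x)"
proof -
  have xi: "\<bar>x$i\<bar> \<le> norm x" and xj: "\<bar>x$j\<bar> \<le> norm x" by (simp_all add: component_le_norm_cart)
  have p: "\<bar>x$a * x$b\<bar> \<le> x \<bullet> x" for a b
  proof -
    have "\<bar>x$a * x$b\<bar> = \<bar>x$a\<bar> * \<bar>x$b\<bar>" by (simp add: abs_mult)
    also have "\<dots> \<le> norm x * norm x"
      by (intro mult_mono) (simp_all add: component_le_norm_cart)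
    also have "\<dots> = x \<bullet> x" by (simp add: norm_eq_sqrt_inner)
    finally show ?thesis .
  qed
  have "x \<bullet> (Em i j *v x) = x$i * x$j + (if i = j then 0 else x$j * x$i)"
    by (simp add: Em_def matrix_vector_mult_add_rdistrib inner_add_right Pm_quad)
  moreover have "0 \<le> x \<bullet> x" by simp
  ultimately show ?thesis
  proof (cases "i = j")
    case True
    then have "x \<bullet> (Em i j *v x) = x$i * x$j" using \<open>x \<bullet> (Em i j *v x) = _\<close> by simp
    then show ?thesis using p[of i j] \<open>0 \<le> x \<bullet> x\<close> by linarith
  next
    case False
    then have "x \<bullet> (Em i j *v x) = x$i * x$j + x$j * x$i" using \<open>x \<bullet> (Em i j *v x) = _\<close> by simp
    then show ?thesis using p[of i j] p[of j i] abs_triangle_ineq[of "x$i * x$j" "x$j * x$i"] by linarith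
  qed
qed

lemma tr_add: "transpose ((A::real^'n^'n) + B) = transpose A + transpose B"
  by (simp add: transpose_def vec_eq_iff)

lemma tr_scaleR: "transpose ((t::real) *\<^sub>R (A::real^'n^'n)) = t *\<^sub>R transpose A"
  by (simp add: transpose_def vec_eq_iff)

lemma tr_zero: "transpose (0::real^'n^'n) = 0"
  by (simp add: transpose_def vec_eq_iff)

lemma transpose_Pm: "transpose (Pm i j) = Pm j i"
  by (auto simp: Pm_def transpose_def vec_eq_iff)

lemma transpose_Em: "transpose (Em i j) = Em i j"
  by (auto simp: Em_def tr_add transpose_Pm tr_zero)

lemma Em_entry: "Em i j $ a $ b = (if (a = i \<and> b = j) \<or> (i \<noteq> j \<and> a = j \<and> b = i) then 1 else 0)"
  by (auto simp: Em_def Pm_def)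

lemma trace_Pm: "trace (A ** Pm i j) = A$j$i"
proof -
  have e: "A$ia$k * (if k = i \<and> ia = j then 1 else 0) = (if k = i then (if ia = j then A$j$i else 0) else 0)" for ia k
    by auto
  show ?thesis by (simp add: trace_def matrix_matrix_mult_def Pm_def e)
qed

lemma trace_Em:
  assumes "transpose A = A"
  shows "trace (A ** Em i j) = (if i = j then 1 else 2) * A$i$j"
proof -
  have s: "A$j$i = A$i$j" using assms by (metis transpose_def vec_lambda_beta)
  show ?thesis by (simp add: Em_def matrix_add_ldistrib trace_add trace_Pm s trace_0[unfolded mat_0])
qed

lemma pd_pert:
  fixes K :: "real^'n^'n"
  assumes "pd_mat K"
  shows "\<exists>d>0. \<forall>t. \<bar>t\<bar> < d \<longrightarrow> pd_mat (K + t *\<^sub>R Em i j)"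
proof -
  obtain c where c: "c > 0" "\<forall>x. c * (x \<bullet> x) \<le> x \<bullet> (K *v x)" using pd_coercive[OF assms] by blast
  have "pd_mat (K + t *\<^sub>R Em i j)" if t: "\<bar>t\<bar> < c / 2" for t
    unfolding pd_mat_def
  proof (intro conjI allI impI)
    show "transpose (K + t *\<^sub>R Em i j) = K + t *\<^sub>R Em i j"
      using assms by (simp add: tr_add tr_scaleR transpose_Em pd_mat_def)
    fix x :: "real^'n" assume "x \<noteq> 0"
    then have xx: "x \<bullet> x > 0" by simp
    have "\<bar>t * (x \<bullet> (Em i j *v x))\<bar> \<le> \<bar>t\<bar> * (2 * (x \<bullet> x))"
      by (simp add: abs_mult mult_left_mono Em_quad)
    also have "\<dots> < (c / 2) * (2 * (x \<bullet> x))" using t xx by (intro mult_strict_right_mono) auto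
    finally have "\<bar>t * (x \<bullet> (Em i j *v x))\<bar> < c * (x \<bullet> x)" by simp
    moreover have "x \<bullet> ((K + t *\<^sub>R Em i j) *v x) = x \<bullet> (K *v x) + t * (x \<bullet> (Em i j *v x))"
      by (simp add: matrix_vector_mult_add_rdistrib scaleR_mv inner_add_right)
    ultimately show "0 < x \<bullet> ((K + t *\<^sub>R Em i j) *v x)" using c(2)[rule_format, of x] by linarith
  qed
  then show ?thesis using c(1) by (intro exI[of _ "c/2"]) auto
qed

lemma deriv_h:
  fixes K S :: "real^'n^'n"
  assumes pK: "pd_mat K" and sS: "transpose S = S"
  shows "DERIV (\<lambda>t. - ln (det (K + t *\<^sub>R Em i j)) + trace (S ** (K + t *\<^sub>R Em i j))) 0
           :> (if i = j then 1 else 2) * (S$i$j - matrix_inv K $i$j)"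
proof -
  define \<Sigma> where "\<Sigma> = matrix_inv K"
  define M where "M = \<Sigma> ** Em i j"
  have iK: "invertible K" using pd_invertible[OF pK] .
  have sK: "transpose K = K" using pK pd_mat_def by blast
  have sSig: "transpose \<Sigma> = \<Sigma>" unfolding \<Sigma>_def using minv_sym[OF iK sK] .
  have eqK: "K + t *\<^sub>R Em i j = K ** (mat 1 + t *\<^sub>R M)" for t
    by (simp add: M_def matrix_add_ldistrib matrix_scalar_ac scalar_matrix_assoc[symmetric]
        matrix_mul_assoc \<Sigma>_def minv(1)[OF iK])
  have dpos: "0 < det K" using det_pos[OF pK] .
  define \<phi> where "\<phi> t = det K * det (mat 1 + t *\<^sub>R M)" for t
  have detEq: "det (K + t *\<^sub>R Em i j) = \<phi> t" for t
    by (simp add: eqK det_mul \<phi>_def)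
  have dphi: "DERIV \<phi> 0 :> det K * trace M"
    unfolding \<phi>_def by (intro DERIV_cmult deriv_det)
  have phi0: "\<phi> 0 = det K" by (simp add: \<phi>_def)
  have dln: "DERIV (\<lambda>t. ln (\<phi> t)) 0 :> inverse (\<phi> 0) * (det K * trace M)"
    by (rule DERIV_chain2[OF DERIV_ln dphi]) (simp add: phi0 dpos)
  have trEq: "trace (S ** (K + t *\<^sub>R Em i j)) = trace (S ** K) + t * trace (S ** Em i j)" for t
    by (simp add: matrix_add_ldistrib trace_add matrix_scalar_ac scalar_matrix_assoc[symmetric] trace_scaleR)
  have "DERIV (\<lambda>t. - ln (\<phi> t) + (trace (S ** K) + t * trace (S ** Em i j))) 0
          :> - (inverse (\<phi> 0) * (det K * trace M)) + trace (S ** Em i j)"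
  proof -
    have d2: "DERIV (\<lambda>t. trace (S ** K) + t * trace (S ** Em i j)) 0 :> trace (S ** Em i j)"
      by (auto intro!: derivative_eq_intros)
    show ?thesis using DERIV_add[OF DERIV_minus[OF dln] d2] by simp
  qed
  moreover have "- (inverse (\<phi> 0) * (det K * trace M)) + trace (S ** Em i j)
      = (if i = j then 1 else 2) * (S$i$j - matrix_inv K $i$j)"
  proof -
    have tM: "trace M = (if i = j then 1 else 2) * \<Sigma>$i$j" by (simp add: M_def trace_Em[OF sSig])
    have "inverse (\<phi> 0) * (det K * trace M) = trace M" using dpos by (simp add: phi0)
    then show ?thesis by (simp add: tM trace_Em[OF sS] \<Sigma>_def algebra_simps)
  qed
  ultimately show ?thesis by (simp add: detEq trEq)
qed

lemma pd_diag_pos: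
  fixes K :: "real^'n^'n"
  assumes "pd_mat K" shows "0 < K$i$i"
proof -
  have "axis i (1::real) \<noteq> 0" by (simp add: axis_eq_0_iff)
  then have "0 < axis i 1 \<bullet> (K *v axis i 1)" using assms pd_mat_def by blast
  also have "axis i 1 \<bullet> (K *v axis i 1) = K$i$i"
    by (simp add: inner_axis' matrix_vector_mult_basis column_def)
  finally show ?thesis .
qed

lemma sym_entry: "transpose A = A \<Longrightarrow> A$j$i = A$i$j"
  by (metis transpose_def vec_lambda_beta)

lemma LU_Fm: "LU_norm L U K = (\<Sum>(a,b)\<in>{(a,b). a \<noteq> b}. Fm (L$a$b) (U$a$b) (K$a$b))"
  by (simp add: LU_norm_def Fm_def)

lemma finite_off: "finite {(a::'n::finite, b). a \<noteq> b}"
  by simp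

lemma pert_entry: "(K + t *\<^sub>R Em i j)$a$b = K$a$b + t * Em i j$a$b"
  by simp

lemma LU_diag:
  "LU_norm L U (K + t *\<^sub>R Em i i) = LU_norm L U K"
  unfolding LU_Fm by (intro sum.cong refl) (auto simp: Em_entry)

lemma Em_zero: "\<not> (a = i \<and> b = j) \<Longrightarrow> \<not> (a = j \<and> b = i) \<Longrightarrow> Em i j $a$b = 0"
  by (auto simp: Em_entry)

lemma LU_split:
  fixes K :: "real^'n^'n" and L U :: "ereal^'n^'n"
  assumes ij: "i \<noteq> j" and sL: "transpose L = L" and sU: "transpose U = U" and sK: "transpose K = K"
  shows "LU_norm L U (K + t *\<^sub>R Em i j) =
    (\<Sum>(a,b)\<in>{(a,b). a \<noteq> b} - {(i,j)} - {(j,i)}. Fm (L$a$b) (U$a$b) (K$a$b)) +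
    (Fm (L$i$j) (U$i$j) (K$i$j + t) + Fm (L$i$j) (U$i$j) (K$i$j + t))"
proof -
  let ?O = "{(a::'n,b). a \<noteq> b}"
  let ?g = "\<lambda>(a,b). Fm (L$a$b) (U$a$b) ((K + t *\<^sub>R Em i j)$a$b)"
  have m1: "(i,j) \<in> ?O" using ij by simp
  have m2: "(j,i) \<in> ?O - {(i,j)}" using ij by simp
  have "LU_norm L U (K + t *\<^sub>R Em i j) = sum ?g ?O" unfolding LU_Fm by simp
  also have "\<dots> = ?g (i,j) + (?g (j,i) + sum ?g (?O - {(i,j)} - {(j,i)}))"
    by (simp add: sum.remove[OF finite_off m1] sum.remove[OF _ m2])
  also have "sum ?g (?O - {(i,j)} - {(j,i)}) = (\<Sum>(a,b)\<in>?O - {(i,j)} - {(j,i)}. Fm (L$a$b) (U$a$b) (K$a$b))"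
  proof (rule sum.cong[OF refl])
    fix p assume pm: "p \<in> ?O - {(i,j)} - {(j,i)}"
    obtain a b where p: "p = (a,b)" by (cases p)
    have "\<not> (a = i \<and> b = j)" "\<not> (a = j \<and> b = i)" using pm p by auto
    then have "Em i j $a$b = 0" by (rule Em_zero)
    then show "?g p = (case p of (a,b) \<Rightarrow> Fm (L$a$b) (U$a$b) (K$a$b))" using p by simp
  qed
  also have "?g (i,j) = Fm (L$i$j) (U$i$j) (K$i$j + t)" by (simp add: Em_entry)
  also have "?g (j,i) = Fm (L$i$j) (U$i$j) (K$i$j + t)"
    using ij by (simp add: Em_entry sym_entry[OF sL] sym_entry[OF sU] sym_entry[OF sK])
  finally show ?thesis by (simp add: ac_simps)
qed

lemma LU_nonneg:
  assumes "\<And>i j. i \<noteq> j \<Longrightarrow> L$i$j \<le> 0 \<and> 0 \<le> U$i$j"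
  shows "0 \<le> LU_norm L U K"
  unfolding LU_Fm using assms by (intro sum_nonneg) (auto intro: Fm_nonneg)

lemma LU_mat1: "LU_norm L U (mat 1 :: real^'n^'n) = 0"
  unfolding LU_Fm by (intro sum.neutral) (auto simp: mat1_entry Fm_zero)

theorem proposition8p2:
  fixes S :: "real^'d^'d" and L U :: "ereal^'d^'d" and Khat :: "real^'d^'d"
  assumes "psd_mat S"
    and "transpose L = L" and "transpose U = U"
    and "\<And>i j. i \<noteq> j \<Longrightarrow> L$i$j \<le> 0 \<and> 0 \<le> U$i$j"
    and "\<And>i. L$i$i = 0 \<and> U$i$i = 0"
    and "pd_mat Khat"
    and "\<And>K. pd_mat K \<Longrightarrow> objective S L U Khat \<le> objective S L U K"
  shows "optimality_cond S L U Khat \<and>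
         (\<forall>K. pd_mat K \<and> optimality_cond S L U K \<longrightarrow> K = Khat)"
proof -
  note sL = assms(2) and sU = assms(3) and LU0 = assms(4) and diag = assms(5)
    and pK = assms(6) and opt = assms(7)
  have sS: "transpose S = S" using assms(1) psd_mat_def by blast
  have sK: "transpose Khat = Khat" using pK pd_mat_def by blast
  define h0 where "h0 = - ln (det Khat) + trace (S ** Khat)"
  have objK: "objective S L U Khat = ereal h0 + LU_norm L U Khat"
    by (simp add: objective_def h0_def)
  have "objective S L U Khat \<le> objective S L U (mat 1)" using opt[OF pd_mat1] .
  also have "objective S L U (mat 1) = ereal (trace S)" by (simp add: objective_def LU_mat1)
  finally have le1: "ereal h0 + LU_norm L U Khat \<le> ereal (trace S)" using objK by simp
  have LUnn: "0 \<le> LU_norm L U Khat" using LU_nonneg[OF LU0] .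
  have LUfin: "LU_norm L U Khat \<noteq> \<infinity>"
  proof
    assume "LU_norm L U Khat = \<infinity>"
    then show False using le1 by simp
  qed
  have hmin: "ereal h0 + LU_norm L U Khat \<le> ereal (- ln (det (Khat + t *\<^sub>R Em i j)) + trace (S ** (Khat + t *\<^sub>R Em i j)))
             + LU_norm L U (Khat + t *\<^sub>R Em i j)"
    if "pd_mat (Khat + t *\<^sub>R Em i j)" for i j t
    using opt[OF that] objK by (simp add: objective_def)
  have OC: "optimality_cond S L U Khat"
    unfolding optimality_cond_def
  proof (intro allI)
    fix i j
    define h where "h t = - ln (det (Khat + t *\<^sub>R Em i j)) + trace (S ** (Khat + t *\<^sub>R Em i j))" for t
    have h0': "h 0 = h0" by (simp add: h_def h0_def)
    obtain d where d: "d > 0" "\<forall>t. \<bar>t\<bar> < d \<longrightarrow> pd_mat (Khat + t *\<^sub>R Em i j)"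
      using pd_pert[OF pK] by blast
    have der: "DERIV h 0 :> (if i = j then 1 else 2) * (S$i$j - matrix_inv Khat $i$j)"
      unfolding h_def by (rule deriv_h[OF pK sS])
    show "(Khat$i$j < 0 \<longrightarrow> ereal (matrix_inv Khat $i$j - S$i$j) = L$i$j) \<and>
      (Khat$i$j = 0 \<longrightarrow> L$i$j \<le> ereal (matrix_inv Khat $i$j - S$i$j) \<and>
                        ereal (matrix_inv Khat $i$j - S$i$j) \<le> U$i$j) \<and>
      (Khat$i$j > 0 \<longrightarrow> ereal (matrix_inv Khat $i$j - S$i$j) = U$i$j)"
    proof (cases "i = j")
      case True
      obtain r where r: "LU_norm L U Khat = ereal r" using LUfin LUnn by (cases "LU_norm L U Khat") auto
      have "h 0 \<le> h y" if "\<bar>0 - y\<bar> < d" for y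
      proof -
        have "pd_mat (Khat + y *\<^sub>R Em i j)" using d that by simp
        from hmin[OF this] have "ereal (h 0) + ereal r \<le> ereal (h y) + ereal r"
          using True r LU_diag[of L U Khat y i] by (simp add: h_def h0_def)
        then show ?thesis by simp
      qed
      then have "(if i = j then 1 else 2) * (S$i$j - matrix_inv Khat $i$j) = 0"
        using DERIV_local_min[OF der d(1)] by blast
      then have "matrix_inv Khat $i$j - S$i$j = 0" using True by simp
      then show ?thesis using True diag[of j] pd_diag_pos[OF pK, of j] by (simp add: zero_ereal_def)
    next
      case False
      let ?R = "(\<Sum>(a,b)\<in>{(a,b). a \<noteq> b} - {(i,j)} - {(j,i)}. Fm (L$a$b) (U$a$b) (Khat$a$b))"
      let ?F = "Fm (L$i$j) (U$i$j)"
      have lu: "L$i$j \<le> 0" "0 \<le> U$i$j" using LU0[OF False] by auto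
      have split0: "LU_norm L U Khat = ?R + (?F (Khat$i$j) + ?F (Khat$i$j))"
        using LU_split[OF False sL sU sK, of 0] by simp
      have Rnn: "0 \<le> ?R" using LU0 by (intro sum_nonneg) (auto intro: Fm_nonneg)
      have Fnn: "0 \<le> ?F x" for x using Fm_nonneg[OF lu(2,1)] .
      have Rfin: "?R \<noteq> \<infinity>" and Ffin: "?F (Khat$i$j) \<noteq> \<infinity>"
        using LUfin split0 Rnn Fnn by auto
      obtain r where r: "?R = ereal r" using Rfin Rnn by (cases ?R) auto
      have ineq: "ereal (h 0) + (ereal r + (?F (Khat$i$j) + ?F (Khat$i$j))) \<le>
                  ereal (h t) + (ereal r + (?F (Khat$i$j + t) + ?F (Khat$i$j + t)))"
        if "\<bar>t\<bar> < d" for t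
      proof -
        have "pd_mat (Khat + t *\<^sub>R Em i j)" using d that by simp
        from hmin[OF this] show ?thesis
          using split0 r LU_split[OF False sL sU sK, of t] by (simp add: h_def h0_def)
      qed
      have der2: "DERIV h 0 :> 2 * (S$i$j - matrix_inv Khat $i$j)" using der False by simp
      show ?thesis using scalar_kkt[OF lu der2 d(1) Ffin ineq] by blast
    qed
  qed
  have LUle: "L$i$j \<le> U$i$j" for i j
  proof (cases "i = j")
    case True then show ?thesis using diag[of i] by simp
  next
    case False then show ?thesis using LU0[OF False] by (meson order_trans)
  qed
  show ?thesis using OC uniq[OF LUle _ pK _ OC] by blast
qed

end
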